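(* Let $G^\sigma$ be an oriented graph whose underlying graph is a complete multipartite graph. If every cycle on $4$ vertices in $G^\sigma$ is evenly-oriented, then any two vertices lying in the same part of the multipartition are uniform twins or opposite twins.
   Context: An oriented graph $G^\sigma$ is a simple graph $G$ (underlying graph) together with an orientation of each edge; write $s_{xy}=1$ if there is an arc from $x$ to $y$, $s_{xy}=-1$ if there is an arc from $y$ to $x$, $s_{xy}=0$ otherwise. For an even cycle $u_1u_2\cdots u_ku_1$, its sign is the sign of $\prod_{i=1}^k s_{u_iu_{i+1}}$ with $u_{k+1}=u_1$; the cycle is evenly-oriented if the sign is positive and oddly-oriented if negative. For a common neighbor $w$ of two nonadjacent vertices $u,v$: the edges among $u,v,w$ have uniform orientations if the arcs go from both $u,v$ to $w$ or from $w$ to both $u,v$; opposite orientations if one arc goes from $u$ (resp. $v$) to $w$ and the other from $w$ to $v$ (resp. $u$). Nonadjacent $u,v$ are uniform (resp. opposite) twins if $N(u)=N(v)$ and for every common neighbor the edges have uniform (resp. opposite) orientations. *)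

theory Defs
  imports Main "HOL-Library.Disjoint_Sets"
begin

text \<open>An oriented graph on the finite vertex set V, given by the sign function s:
  s x y = 1 if there is an arc x -> y, s x y = -1 if there is an arc y -> x, 0 otherwise.\<close>
definition oriented_graph :: "'a set \<Rightarrow> ('a \<Rightarrow> 'a \<Rightarrow> int) \<Rightarrow> bool" where
  "oriented_graph V s \<longleftrightarrow> finite V \<and>
     (\<forall>x\<in>V. \<forall>y\<in>V. s x y \<in> {-1, 0, 1} \<and> s y x = - s x y) \<and>
     (\<forall>x\<in>V. s x x = 0)"

definition adj :: "('a \<Rightarrow> 'a \<Rightarrow> int) \<Rightarrow> 'a \<Rightarrow> 'a \<Rightarrow> bool" where
  "adj s x y \<longleftrightarrow> s x y \<noteq> 0"

definition nbhd :: "'a set \<Rightarrow> ('a \<Rightarrow> 'a \<Rightarrow> int) \<Rightarrow> 'a \<Rightarrow> 'a set" where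
  "nbhd V s x = {w \<in> V. adj s x w}"

definition complete_multipartite :: "'a set \<Rightarrow> ('a \<Rightarrow> 'a \<Rightarrow> int) \<Rightarrow> 'a set set \<Rightarrow> bool" where
  "complete_multipartite V s P \<longleftrightarrow> partition_on V P \<and>
     (\<forall>x\<in>V. \<forall>y\<in>V. adj s x y \<longleftrightarrow> \<not> (\<exists>p\<in>P. x \<in> p \<and> y \<in> p))"

definition all_C4_even :: "'a set \<Rightarrow> ('a \<Rightarrow> 'a \<Rightarrow> int) \<Rightarrow> bool" where
  "all_C4_even V s \<longleftrightarrow>
     (\<forall>u1\<in>V. \<forall>u2\<in>V. \<forall>u3\<in>V. \<forall>u4\<in>V.
        distinct [u1, u2, u3, u4] \<and> adj s u1 u2 \<and> adj s u2 u3 \<and> adj s u3 u4 \<and> adj s u4 u1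
        \<longrightarrow> s u1 u2 * s u2 u3 * s u3 u4 * s u4 u1 > 0)"

definition uniform_twins :: "'a set \<Rightarrow> ('a \<Rightarrow> 'a \<Rightarrow> int) \<Rightarrow> 'a \<Rightarrow> 'a \<Rightarrow> bool" where
  "uniform_twins V s u v \<longleftrightarrow> \<not> adj s u v \<and> nbhd V s u = nbhd V s v \<and>
     (\<forall>w\<in>nbhd V s u. (s u w = 1 \<and> s v w = 1) \<or> (s w u = 1 \<and> s w v = 1))"

definition opposite_twins :: "'a set \<Rightarrow> ('a \<Rightarrow> 'a \<Rightarrow> int) \<Rightarrow> 'a \<Rightarrow> 'a \<Rightarrow> bool" where
  "opposite_twins V s u v \<longleftrightarrow> \<not> adj s u v \<and> nbhd V s u = nbhd V s v \<and>
     (\<forall>w\<in>nbhd V s u. (s u w = 1 \<and> s w v = 1) \<or> (s v w = 1 \<and> s w u = 1))"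

end

theory Submission
  imports Defs
begin

lemma sgn_cases: "(a::int) = 1 \<or> a = -1 \<Longrightarrow> (b::int) = 1 \<or> b = -1 \<Longrightarrow> a * b = 1 \<or> a * b = -1"
  by auto

theorem lemma2p9:
  fixes V :: "'a set" and s :: "'a \<Rightarrow> 'a \<Rightarrow> int" and P :: "'a set set"
  assumes "oriented_graph V s"
    and "complete_multipartite V s P"
    and "all_C4_even V s"
    and "p \<in> P" and "u \<in> p" and "v \<in> p" and "u \<noteq> v"
  shows "uniform_twins V s u v \<or> opposite_twins V s u v"
proof -
  have og: "\<forall>x\<in>V. \<forall>y\<in>V. s x y \<in> {-1, 0, 1} \<and> s y x = - s x y"
    using assms(1) unfolding oriented_graph_def by blast
  have pon: "partition_on V P" and cm: "\<forall>x\<in>V. \<forall>y\<in>V. adj s x y \<longleftrightarrow> \<not> (\<exists>p\<in>P. x \<in> p \<and> y \<in> p)"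
    using assms(2) unfolding complete_multipartite_def by blast+
  have pV: "p \<subseteq> V" using pon assms(4) unfolding partition_on_def by blast
  have uV: "u \<in> V" and vV: "v \<in> V" using pV assms(5,6) by blast+
  have uniq: "\<And>q x. q \<in> P \<Longrightarrow> x \<in> q \<Longrightarrow> x \<in> p \<Longrightarrow> q = p"
    using pon assms(4) unfolding partition_on_def disjoint_def by blast
  have adjp: "\<And>z x. z \<in> p \<Longrightarrow> x \<in> V \<Longrightarrow> adj s z x \<longleftrightarrow> x \<notin> p"
  proof -
    fix z x assume z: "z \<in> p" and x: "x \<in> V"
    have zV: "z \<in> V" using z pV by blast
    have e: "adj s z x \<longleftrightarrow> \<not> (\<exists>q\<in>P. z \<in> q \<and> x \<in> q)" using cm zV x by blast
    show "adj s z x \<longleftrightarrow> x \<notin> p"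
    proof
      assume "adj s z x" thus "x \<notin> p" using e z assms(4) by blast
    next
      assume xp: "x \<notin> p"
      have "\<not> (\<exists>q\<in>P. z \<in> q \<and> x \<in> q)"
      proof
        assume "\<exists>q\<in>P. z \<in> q \<and> x \<in> q"
        then obtain q where "q \<in> P" "z \<in> q" "x \<in> q" by blast
        then have "q = p" using uniq z by blast
        then show False using xp \<open>x \<in> q\<close> by blast
      qed
      thus "adj s z x" using e by blast
    qed
  qed
  have nuv: "\<not> adj s u v" using adjp[OF assms(5) vV] assms(6) by blast
  have nbu: "nbhd V s u = V - p" using adjp[OF assms(5)] unfolding nbhd_def by blast
  have nbv: "nbhd V s v = V - p" using adjp[OF assms(6)] unfolding nbhd_def by blast
  have nb: "nbhd V s u = nbhd V s v" using nbu nbv by simp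
  have sv1: "\<And>z w. z \<in> p \<Longrightarrow> w \<in> V - p \<Longrightarrow> s z w = 1 \<or> s z w = -1"
  proof -
    fix z w assume z: "z \<in> p" and w: "w \<in> V - p"
    have "adj s z w" using adjp[OF z] w by blast
    hence nz: "s z w \<noteq> 0" unfolding adj_def .
    have zV: "z \<in> V" using z pV by blast
    have "s z w \<in> {-1, 0, 1}" using og zV w by blast
    then show "s z w = 1 \<or> s z w = -1" using nz by blast
  qed
  have sv2: "\<And>z w. z \<in> p \<Longrightarrow> w \<in> V - p \<Longrightarrow> s w z = - s z w"
  proof -
    fix z w assume z: "z \<in> p" and w: "w \<in> V - p"
    have zV: "z \<in> V" using z pV by blast
    show "s w z = - s z w" using og zV w by blast
  qed
  have key: "\<And>w w'. w \<in> V - p \<Longrightarrow> w' \<in> V - p \<Longrightarrow>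
       s u w * s v w * (s u w' * s v w') > 0"
  proof -
    fix w w' assume w: "w \<in> V - p" and w': "w' \<in> V - p"
    show "s u w * s v w * (s u w' * s v w') > 0"
    proof (cases "w = w'")
      case True
      have "s u w * s v w = 1 \<or> s u w * s v w = -1"
        using sgn_cases[OF sv1[OF assms(5) w] sv1[OF assms(6) w]] .
      then show ?thesis using True by auto
    next
      case False
      have d: "distinct [u, w, v, w']" using False w w' assms(5,6,7) by auto
      have a1: "adj s u w" using adjp[OF assms(5)] w by blast
      have a2: "adj s w v"
        using sv1[OF assms(6) w] sv2[OF assms(6) w] unfolding adj_def by auto
      have a3: "adj s v w'" using adjp[OF assms(6)] w' by blast
      have a4: "adj s w' u"
        using sv1[OF assms(5) w'] sv2[OF assms(5) w'] unfolding adj_def by auto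
      have "\<forall>u1\<in>V. \<forall>u2\<in>V. \<forall>u3\<in>V. \<forall>u4\<in>V.
          distinct [u1, u2, u3, u4] \<and> adj s u1 u2 \<and> adj s u2 u3 \<and> adj s u3 u4 \<and> adj s u4 u1
          \<longrightarrow> s u1 u2 * s u2 u3 * s u3 u4 * s u4 u1 > 0"
        using assms(3) unfolding all_C4_even_def .
      hence imp: "distinct [u, w, v, w'] \<and> adj s u w \<and> adj s w v \<and> adj s v w' \<and> adj s w' u
          \<longrightarrow> s u w * s w v * s v w' * s w' u > 0" using uV vV w w' by blast
      have pos: "s u w * s w v * s v w' * s w' u > 0" using imp d a1 a2 a3 a4 by blast
      have eq: "s u w * s w v * s v w' * s w' u = s u w * s v w * (s u w' * s v w')"
        using sv2[OF assms(6) w] sv2[OF assms(5) w'] by simp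
      show ?thesis using pos eq by simp
    qed
  qed
  show ?thesis
  proof (cases "\<forall>w\<in>V - p. s u w * s v w = 1")
    case True
    have "\<forall>w\<in>nbhd V s u. (s u w = 1 \<and> s v w = 1) \<or> (s w u = 1 \<and> s w v = 1)"
    proof
      fix w assume "w \<in> nbhd V s u"
      hence w: "w \<in> V - p" using nbu by simp
      have t: "s u w * s v w = 1" using True w by blast
      show "(s u w = 1 \<and> s v w = 1) \<or> (s w u = 1 \<and> s w v = 1)"
        using sv1[OF assms(5) w] sv1[OF assms(6) w] sv2[OF assms(5) w] sv2[OF assms(6) w] t
        by auto
    qed
    then show ?thesis using nuv nb unfolding uniform_twins_def by blast
  next
    case False
    then obtain w0 where w0: "w0 \<in> V - p" "s u w0 * s v w0 \<noteq> 1" by blast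
    have t0: "s u w0 * s v w0 = -1"
      using sgn_cases[OF sv1[OF assms(5) w0(1)] sv1[OF assms(6) w0(1)]] w0(2) by blast
    have "\<forall>w\<in>nbhd V s u. (s u w = 1 \<and> s w v = 1) \<or> (s v w = 1 \<and> s w u = 1)"
    proof
      fix w assume "w \<in> nbhd V s u"
      hence w: "w \<in> V - p" using nbu by simp
      have k: "s u w0 * s v w0 * (s u w * s v w) > 0" using key[OF w0(1) w] .
      have "s u w * s v w = 1 \<or> s u w * s v w = -1"
        using sgn_cases[OF sv1[OF assms(5) w] sv1[OF assms(6) w]] .
      then have t: "s u w * s v w = -1" using t0 k by auto
      show "(s u w = 1 \<and> s w v = 1) \<or> (s v w = 1 \<and> s w u = 1)"
        using sv1[OF assms(5) w] sv1[OF assms(6) w] sv2[OF assms(5) w] sv2[OF assms(6) w] t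
        by auto
    qed
    then show ?thesis using nuv nb unfolding opposite_twins_def by blast
  qed
qed

end
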